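(* Consider the affine control system $\dot x=Ax+a+Bu$ on $\mathbb R^n$ with piecewise continuous controls. Let $\Omega$ and $\Omega_f$ be closed sets with $\Omega\cap\Omega_f\ne\emptyset$. Then $\Omega\xrightarrow{\Omega}\Omega_f$ if and only if no $\Omega$-invariant set is contained in $\Omega\setminus\Omega_f$.
   Context: $\phi^u_t(x_0)$ denotes the solution from $x_0$ under the piecewise continuous control $u:t\mapsto u(t)$. For $x\in\Omega$, $x\xrightarrow{\Omega}\Omega_f$ means there exist a piecewise continuous control $u$ and $T\ge0$ with $\phi^u_T(x)\in\Omega_f$ and $\phi^u_t(x)\in\Omega$ for all $t\in[0,T]$; $\Omega\xrightarrow{\Omega}\Omega_f$ means this holds for every $x\in\Omega$. A set $\mathcal A\subseteq\Omega$ is $\Omega$-invariant if for every $x_0\in\mathcal A$ and every piecewise continuous $u$, every trajectory $\phi^u_t(x_0)$ that lies in $\Omega$ on an interval $[0,T]$ ($T<\infty$) or $[0,\infty)$ lies in $\mathcal A$ on the same interval. (The empty set is not counted as an $\Omega$-invariant set in $\Omega\setminus\Omega_f$ in this statement, i.e. the claim concerns nonempty sets.) *)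

theory Defs
  imports "HOL-Analysis.Analysis"
begin

definition piecewise_continuous :: "(real \<Rightarrow> 'b::topological_space) \<Rightarrow> bool" where
  "piecewise_continuous u \<longleftrightarrow>
     (\<forall>T\<ge>0. \<exists>S. finite S \<and> continuous_on ({0..T} - S) u \<and>
        (\<forall>s\<in>S. (\<exists>l. (u \<longlongrightarrow> l) (at_right s)) \<and>
                 (s > 0 \<longrightarrow> (\<exists>l. (u \<longlongrightarrow> l) (at_left s)))))"

definition is_solution ::
  "real^'n^'n \<Rightarrow> real^'n \<Rightarrow> real^'m^'n \<Rightarrow> (real \<Rightarrow> real^'m) \<Rightarrow> real^'n \<Rightarrow> (real \<Rightarrow> real^'n) \<Rightarrow> bool" where
  "is_solution A a B u x0 x \<longleftrightarrow>
     x 0 = x0 \<and>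
     (\<forall>t\<ge>0. ((\<lambda>s. A *v x s + a + B *v u s) has_integral (x t - x0)) {0..t})"

definition reaches_within ::
  "real^'n^'n \<Rightarrow> real^'n \<Rightarrow> real^'m^'n \<Rightarrow> (real^'n) set \<Rightarrow> (real^'n) set \<Rightarrow> real^'n \<Rightarrow> bool" where
  "reaches_within A a B \<Omega> \<Omega>f x0 \<longleftrightarrow>
     (\<exists>(u :: real \<Rightarrow> real^'m) x T. piecewise_continuous u \<and> is_solution A a B u x0 x \<and> T \<ge> 0 \<and>
        x T \<in> \<Omega>f \<and> (\<forall>t\<in>{0..T}. x t \<in> \<Omega>))"

definition set_reaches_within ::
  "real^'n^'n \<Rightarrow> real^'n \<Rightarrow> real^'m^'n \<Rightarrow> (real^'n) set \<Rightarrow> (real^'n) set \<Rightarrow> bool" where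
  "set_reaches_within A a B \<Omega> \<Omega>f \<longleftrightarrow> (\<forall>x0\<in>\<Omega>. reaches_within A a B \<Omega> \<Omega>f x0)"

definition Omega_invariant ::
  "real^'n^'n \<Rightarrow> real^'n \<Rightarrow> real^'m^'n \<Rightarrow> (real^'n) set \<Rightarrow> (real^'n) set \<Rightarrow> bool" where
  "Omega_invariant A a B \<Omega> S \<longleftrightarrow> S \<subseteq> \<Omega> \<and>
     (\<forall>x0\<in>S. \<forall>(u :: real \<Rightarrow> real^'m) x. piecewise_continuous u \<and> is_solution A a B u x0 x \<longrightarrow>
        (\<forall>T\<ge>0. (\<forall>t\<in>{0..T}. x t \<in> \<Omega>) \<longrightarrow> (\<forall>t\<in>{0..T}. x t \<in> S)) \<and>
        ((\<forall>t\<ge>0. x t \<in> \<Omega>) \<longrightarrow> (\<forall>t\<ge>0. x t \<in> S)))"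

end

theory Submission
  imports Defs
begin

lemma finite_gap_right:
  fixes s :: real
  assumes "finite S"
  shows "\<exists>b>s. {s<..<b} \<inter> S = {}"
proof -
  let ?P = "{x\<in>S. x > s}"
  have fin: "finite ?P" using assms by auto
  show ?thesis
  proof (cases "?P = {}")
    case True
    then show ?thesis by (intro exI[of _ "s+1"]) auto
  next
    case False
    then show ?thesis
    proof (intro exI[of _ "Min ?P"] conjI)
      show "s < Min ?P" using Min_in[OF fin False] by auto
      show "{s<..<Min ?P} \<inter> S = {}" using Min_le[OF fin] by force
    qed
  qed
qed

lemma finite_gap_left:
  fixes s :: real
  assumes "finite S"
  shows "\<exists>b<s. {b<..<s} \<inter> S = {}"
proof -
  let ?P = "{x\<in>S. x < s}"
  have fin: "finite ?P" using assms by auto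
  show ?thesis
  proof (cases "?P = {}")
    case True
    then show ?thesis by (intro exI[of _ "s-1"]) auto
  next
    case False
    then show ?thesis
    proof (intro exI[of _ "Max ?P"] conjI)
      show "Max ?P < s" using Max_in[OF fin False] by auto
      show "{Max ?P<..<s} \<inter> S = {}" using Max_ge[OF fin] by force
    qed
  qed
qed

lemma at_right_le_within:
  fixes s :: real
  assumes "s < b" "{s<..<b} \<subseteq> X"
  shows "at_right s \<le> at s within X"
proof (rule filter_leI)
  fix P assume "eventually P (at s within X)"
  then obtain d where d: "d > 0" "\<And>y. y \<in> X \<Longrightarrow> y \<noteq> s \<Longrightarrow> dist y s < d \<Longrightarrow> P y"
    unfolding eventually_at by auto
  show "eventually P (at_right s)"
    unfolding eventually_at_right_field
    by (rule exI[of _ "min b (s+d)"]) (use assms d in \<open>auto simp: dist_real_def\<close>)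
qed

lemma at_left_le_within:
  fixes s :: real
  assumes "b < s" "{b<..<s} \<subseteq> X"
  shows "at_left s \<le> at s within X"
proof (rule filter_leI)
  fix P assume "eventually P (at s within X)"
  then obtain d where d: "d > 0" "\<And>y. y \<in> X \<Longrightarrow> y \<noteq> s \<Longrightarrow> dist y s < d \<Longrightarrow> P y"
    unfolding eventually_at by auto
  show "eventually P (at_left s)"
    unfolding eventually_at_left_field
    by (rule exI[of _ "max b (s-d)"]) (use assms d in \<open>auto simp: dist_real_def\<close>)
qed

lemma pc_obtain:
  assumes "piecewise_continuous u" "T \<ge> 0"
  obtains S where "finite S" "S \<subseteq> {0..T}" "continuous_on ({0..T} - S) u"
proof -
  obtain S where "finite S" "continuous_on ({0..T} - S) u"
    using assms unfolding piecewise_continuous_def by blast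
  moreover have "{0..T} - S = {0..T} - (S \<inter> {0..T})" by auto
  ultimately show ?thesis using that[of "S \<inter> {0..T}"] by auto
qed

lemma pc_right_lim:
  assumes "piecewise_continuous u" "(s::real) \<ge> 0"
  shows "\<exists>l. (u \<longlongrightarrow> l) (at_right s)"
proof -
  obtain S where S: "finite S" "continuous_on ({0..s+1} - S) u"
    "\<forall>x\<in>S. (\<exists>l. (u \<longlongrightarrow> l) (at_right x))"
    using assms unfolding piecewise_continuous_def by (metis add_nonneg_nonneg zero_le_one)
  show ?thesis
  proof (cases "s \<in> S")
    case True then show ?thesis using S by auto
  next
    case False
    obtain b where b: "b > s" "{s<..<b} \<inter> S = {}" using finite_gap_right[OF S(1)] by blast
    have sub: "{s<..<min b (s+1)} \<subseteq> {0..s+1} - S" using b assms by auto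
    have "at_right s \<le> at s within ({0..s+1} - S)"
      by (rule at_right_le_within[OF _ sub]) (use b in auto)
    moreover have "(u \<longlongrightarrow> u s) (at s within ({0..s+1} - S))"
      using S(2) False assms unfolding continuous_on_def by auto
    ultimately show ?thesis using tendsto_mono by blast
  qed
qed

lemma pc_left_lim:
  assumes "piecewise_continuous u" "(s::real) > 0"
  shows "\<exists>l. (u \<longlongrightarrow> l) (at_left s)"
proof -
  obtain S where S: "finite S" "continuous_on ({0..s} - S) u"
    "\<forall>x\<in>S. x > 0 \<longrightarrow> (\<exists>l. (u \<longlongrightarrow> l) (at_left x))"
    using assms unfolding piecewise_continuous_def by (metis less_imp_le)
  show ?thesis
  proof (cases "s \<in> S")
    case True then show ?thesis using S assms by auto
  next
    case False
    obtain b where b: "b < s" "{b<..<s} \<inter> S = {}" using finite_gap_left[OF S(1)] by blast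
    have sub: "{max b 0<..<s} \<subseteq> {0..s} - S" using b assms by auto
    have "at_left s \<le> at s within ({0..s} - S)"
      by (rule at_left_le_within[OF _ sub]) (use b assms in auto)
    moreover have "(u \<longlongrightarrow> u s) (at s within ({0..s} - S))"
      using S(2) False assms unfolding continuous_on_def by auto
    ultimately show ?thesis using tendsto_mono by blast
  qed
qed

lemma pcI:
  assumes "\<And>T. T \<ge> 0 \<Longrightarrow> \<exists>S. finite S \<and> S \<subseteq> {0..} \<and> continuous_on ({0..T} - S) u"
    and "\<And>s. (s::real) \<ge> 0 \<Longrightarrow> \<exists>l. (u \<longlongrightarrow> l) (at_right s)"
    and "\<And>s. (s::real) > 0 \<Longrightarrow> \<exists>l. (u \<longlongrightarrow> l) (at_left s)"
  shows "piecewise_continuous u"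
  unfolding piecewise_continuous_def
proof (intro allI impI)
  fix T :: real assume "T \<ge> 0"
  then obtain S where "finite S" "S \<subseteq> {0..}" "continuous_on ({0..T} - S) u" using assms(1) by blast
  then show "\<exists>S. finite S \<and> continuous_on ({0..T} - S) u \<and>
        (\<forall>s\<in>S. (\<exists>l. (u \<longlongrightarrow> l) (at_right s)) \<and> (0 < s \<longrightarrow> (\<exists>l. (u \<longlongrightarrow> l) (at_left s))))"
    using assms(2,3) by (intro exI[of _ S]) auto
qed

lemma shift_right_lim:
  assumes "(v \<longlongrightarrow> l) (at_right (s - t))"
  shows "((\<lambda>x. v (x - t)) \<longlongrightarrow> l) (at_right (s::real))"
proof -
  have "((v \<circ> (\<lambda>x. x - t)) \<longlongrightarrow> l) (at_right s)"
    unfolding tendsto_compose_filtermap filtermap_at_right_shift using assms .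
  then show ?thesis by (simp add: o_def)
qed

lemma filtermap_at_left_shift': "filtermap (\<lambda>x. x - d) (at_left a) = at_left (a - d)"
  for a d :: "real"
  by (simp add: filter_eq_iff eventually_filtermap eventually_at_filter filtermap_nhds_shift[symmetric])

lemma shift_left_lim:
  assumes "(v \<longlongrightarrow> l) (at_left (s - t))"
  shows "((\<lambda>x. v (x - t)) \<longlongrightarrow> l) (at_left (s::real))"
proof -
  have "((v \<circ> (\<lambda>x. x - t)) \<longlongrightarrow> l) (at_left s)"
    unfolding tendsto_compose_filtermap filtermap_at_left_shift' using assms .
  then show ?thesis by (simp add: o_def)
qed

lemma glue_pc:
  assumes u: "piecewise_continuous u" and v: "piecewise_continuous v" and t: "(t::real) \<ge> 0"
  shows "piecewise_continuous (\<lambda>s. if s \<le> t then u s else v (s - t))" (is "piecewise_continuous ?w")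
proof (rule pcI)
  fix T :: real assume T: "T \<ge> 0"
  obtain S1 where S1: "finite S1" "S1 \<subseteq> {0..T}" "continuous_on ({0..T} - S1) u"
    using pc_obtain[OF u T] by blast
  obtain S2 where S2: "finite S2" "S2 \<subseteq> {0..T}" "continuous_on ({0..T} - S2) v"
    using pc_obtain[OF v T] by blast
  define S where "S = S1 \<union> {t} \<union> (\<lambda>x. x + t) ` S2"
  have finS: "finite S" using S1 S2 unfolding S_def by auto
  have Spos: "S \<subseteq> {0..}" using S1 S2 t unfolding S_def by auto
  let ?X = "{0..T} - S"
  have X: "?X = (?X \<inter> {..<t}) \<union> (?X \<inter> {t<..})" unfolding S_def by auto
  have c1: "continuous_on (?X \<inter> {..<t}) ?w"
  proof -
    have "continuous_on (?X \<inter> {..<t}) u"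
      by (rule continuous_on_subset[OF S1(3)]) (auto simp: S_def)
    then show ?thesis by (rule continuous_on_eq) auto
  qed
  have c2: "continuous_on (?X \<inter> {t<..}) ?w"
  proof -
    have "continuous_on (?X \<inter> {t<..}) (\<lambda>x. x - t)" by (intro continuous_intros)
    moreover have "(\<lambda>x. x - t) ` (?X \<inter> {t<..}) \<subseteq> {0..T} - S2"
    proof
      fix y assume "y \<in> (\<lambda>x. x - t) ` (?X \<inter> {t<..})"
      then obtain x where x: "x \<in> ?X" "x > t" "y = x - t" by auto
      have "y \<notin> S2"
      proof
        assume "y \<in> S2"
        then have "x \<in> S" unfolding S_def using x by (auto intro!: image_eqI[of _ _ "x - t"])
        then show False using x by auto
      qed
      then show "y \<in> {0..T} - S2" using x t by auto
    qed
    ultimately have "continuous_on (?X \<inter> {t<..}) (v \<circ> (\<lambda>x. x - t))"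
      by (intro continuous_on_compose) (assumption, rule continuous_on_subset[OF S2(3)], assumption)
    then show ?thesis by (rule continuous_on_eq) auto
  qed
  have "continuous_on ((?X \<inter> {..<t}) \<union> (?X \<inter> {t<..})) ?w"
  proof (rule continuous_on_Un_local_open[OF _ _ c1 c2])
    show "openin (top_of_set (?X \<inter> {..<t} \<union> ?X \<inter> {t<..})) (?X \<inter> {..<t})"
      by (subst openin_open) (rule exI[of _ "{..<t}"], auto)
    show "openin (top_of_set (?X \<inter> {..<t} \<union> ?X \<inter> {t<..})) (?X \<inter> {t<..})"
      by (subst openin_open) (rule exI[of _ "{t<..}"], auto)
  qed
  then have "continuous_on ?X ?w" by (subst X)
  then show "\<exists>S. finite S \<and> S \<subseteq> {0..} \<and> continuous_on ({0..T} - S) ?w"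
    using finS Spos by blast
next
  fix s :: real assume s: "s \<ge> 0"
  show "\<exists>l. (?w \<longlongrightarrow> l) (at_right s)"
  proof (cases "s < t")
    case True
    obtain l where l: "(u \<longlongrightarrow> l) (at_right s)" using pc_right_lim[OF u s] by blast
    have ev: "eventually (\<lambda>x. u x = ?w x) (at_right s)"
      using eventually_at_right_real[OF True] by eventually_elim auto
    show ?thesis using Lim_transform_eventually[OF l ev] by blast
  next
    case False
    obtain l where l: "(v \<longlongrightarrow> l) (at_right (s - t))" using pc_right_lim[OF v] False by force
    have ev: "eventually (\<lambda>x. v (x - t) = ?w x) (at_right s)"
      using eventually_at_right_less[of s] by eventually_elim (use False in auto)
    show ?thesis using Lim_transform_eventually[OF shift_right_lim[OF l] ev] by blast
  qed
next
  fix s :: real assume s: "s > 0"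
  show "\<exists>l. (?w \<longlongrightarrow> l) (at_left s)"
  proof (cases "s \<le> t")
    case True
    obtain l where l: "(u \<longlongrightarrow> l) (at_left s)" using pc_left_lim[OF u s] by blast
    have ev: "eventually (\<lambda>x. u x = ?w x) (at_left s)"
      using eventually_at_left_real[OF s] by eventually_elim (use True in auto)
    show ?thesis using Lim_transform_eventually[OF l ev] by blast
  next
    case False
    obtain l where l: "(v \<longlongrightarrow> l) (at_left (s - t))" using pc_left_lim[OF v] False by force
    have ev: "eventually (\<lambda>x. v (x - t) = ?w x) (at_left s)"
    proof -
      have "t < s" using False by simp
      from eventually_at_left_real[OF this] show ?thesis by eventually_elim auto
    qed
    show ?thesis using Lim_transform_eventually[OF shift_left_lim[OF l] ev] by blast
  qed
qed

lemma pc_zero: "piecewise_continuous (\<lambda>_. 0)"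
  unfolding piecewise_continuous_def by (auto intro!: exI[of _ "{}"])


lemma shift_integral:
  fixes g :: "real \<Rightarrow> 'b::euclidean_space"
  assumes "(g has_integral i) {0..r}"
  shows "((\<lambda>\<sigma>. g (\<sigma> - t)) has_integral i) {t..r+t}"
proof -
  have "(g has_integral i) (cbox 0 r)" using assms by simp
  from has_integral_affinity'[OF this, of 1 "-t"]
  show ?thesis by simp
qed

lemma glue_sol:
  assumes x: "is_solution A a B u x0 x" and y: "is_solution A a B v (x t) y" and t: "(t::real) \<ge> 0"
  shows "is_solution A a B (\<lambda>s. if s \<le> t then u s else v (s - t)) x0
           (\<lambda>s. if s \<le> t then x s else y (s - t))"
  unfolding is_solution_def
proof (intro conjI allI impI)
  let ?w = "\<lambda>s. if s \<le> t then u s else v (s - t)"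
  let ?z = "\<lambda>s. if s \<le> t then x s else y (s - t)"
  let ?f = "\<lambda>\<sigma>. A *v ?z \<sigma> + a + B *v ?w \<sigma>"
  have x0: "x 0 = x0" and xi: "\<And>s. s \<ge> 0 \<Longrightarrow> ((\<lambda>s. A *v x s + a + B *v u s) has_integral (x s - x0)) {0..s}"
    using x unfolding is_solution_def by auto
  have y0: "y 0 = x t" and yi: "\<And>s. s \<ge> 0 \<Longrightarrow> ((\<lambda>s. A *v y s + a + B *v v s) has_integral (y s - x t)) {0..s}"
    using y unfolding is_solution_def by auto
  show "?z 0 = x0" using t x0 by simp
  fix s :: real assume s: "s \<ge> 0"
  show "(?f has_integral (?z s - x0)) {0..s}"
  proof (cases "s \<le> t")
    case True
    have "(?f has_integral (x s - x0)) {0..s}"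
      by (rule has_integral_eq[OF _ xi[OF s]]) (use True in auto)
    then show ?thesis using True by simp
  next
    case False
    have I1: "(?f has_integral (x t - x0)) {0..t}"
      by (rule has_integral_eq[OF _ xi[OF t]]) auto
    have "((\<lambda>\<sigma>. A *v y (\<sigma> - t) + a + B *v v (\<sigma> - t)) has_integral (y (s - t) - x t)) {t..(s-t)+t}"
      using shift_integral[OF yi, of "s - t" t] False by simp
    then have "((\<lambda>\<sigma>. A *v y (\<sigma> - t) + a + B *v v (\<sigma> - t)) has_integral (y (s - t) - x t)) {t..s}"
      by simp
    from has_integral_spike_finite[of "{t}", OF _ _ this]
    have I2: "(?f has_integral (y (s - t) - x t)) {t..s}" by auto
    have "(?f has_integral ((x t - x0) + (y (s - t) - x t))) {0..s}"
      by (rule has_integral_combine[OF t _ I1 I2]) (use False in auto)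
    then show ?thesis using False by simp
  qed
qed


fun coef :: "real^'n^'n \<Rightarrow> real^'n \<Rightarrow> real^'n \<Rightarrow> nat \<Rightarrow> real^'n" where
  "coef A a x0 0 = x0"
| "coef A a x0 (Suc k) = (1 / real (Suc k)) *\<^sub>R (A *v coef A a x0 k + (if k = 0 then a else 0))"

lemma coef_bound:
  fixes A :: "real^'n^'n"
  assumes K0: "K0 \<ge> 0" "\<And>v. norm (A *v v) \<le> norm v * K0"
  shows "norm (coef A a x0 k) \<le> (norm x0 + norm a) * (K0 + 1) ^ k / fact k"
proof (induction k)
  case 0
  then show ?case by simp
next
  case (Suc k)
  let ?C = "norm x0 + norm a" and ?K = "K0 + 1"
  have C: "?C \<ge> 0" by simp
  have d: "norm (A *v coef A a x0 k + (if k = 0 then a else 0)) \<le> ?C * ?K ^ Suc k / fact k"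
  proof (cases "k = 0")
    case True
    have "norm (A *v x0 + a) \<le> norm x0 * K0 + norm a"
      using K0(2)[of x0] norm_triangle_ineq[of "A *v x0" a] by linarith
    also have "\<dots> \<le> ?C * ?K"
      using K0(1) by (simp add: algebra_simps mult_nonneg_nonneg)
    finally show ?thesis using True by simp
  next
    case False
    have "norm (A *v coef A a x0 k) \<le> norm (coef A a x0 k) * K0" by (rule K0(2))
    also have "\<dots> \<le> (?C * ?K ^ k / fact k) * K0"
      by (rule mult_right_mono[OF Suc.IH K0(1)])
    also have "\<dots> \<le> (?C * ?K ^ k / fact k) * ?K"
    proof (rule mult_left_mono)
      have "0 \<le> ?K ^ k" using K0(1) by simp
      then show "0 \<le> ?C * ?K ^ k / fact k" using C by simp
    qed simp
    also have "\<dots> = ?C * ?K ^ Suc k / fact k" by (simp add: field_simps)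
    finally show ?thesis using False by simp
  qed
  have "norm (coef A a x0 (Suc k)) = norm (A *v coef A a x0 k + (if k = 0 then a else 0)) / real (Suc k)"
    by simp
  also have "\<dots> \<le> (?C * ?K ^ Suc k / fact k) / real (Suc k)"
    by (rule divide_right_mono[OF d]) simp
  also have "\<dots> = ?C * ?K ^ Suc k / fact (Suc k)"
    by (simp add: field_simps)
  finally show ?case .
qed

lemma exists_sol:
  fixes A :: "real^'n^'n" and B :: "real^'m^'n"
  shows "\<exists>x. is_solution A a B (\<lambda>_. 0) x0 x"
proof -
  obtain K1 where K1: "K1 > 0" "\<And>v. norm (A *v v) \<le> norm v * K1"
    using bounded_linear.pos_bounded[OF matrix_vector_mul_bounded_linear[of A]] by blast
  define c where "c = coef A a x0"
  define C where "C = norm x0 + norm a"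
  define K where "K = K1 + 1"
  have cb: "norm (c k) \<le> C * K ^ k / fact k" for k
    unfolding c_def C_def K_def using coef_bound[of K1 A a x0 k] K1 by simp
  have Kpos: "K > 0" unfolding K_def using K1 by simp
  have summ: "summable (\<lambda>k. t ^ k *\<^sub>R c k)" for t :: real
  proof (rule summable_norm_cancel, rule summable_comparison_test')
    show "summable (\<lambda>k. C * (inverse (fact k) * (K * \<bar>t\<bar>) ^ k))"
      by (intro summable_mult summable_exp)
    fix k :: nat
    have "norm (norm (t ^ k *\<^sub>R c k)) = \<bar>t\<bar> ^ k * norm (c k)" by (simp add: power_abs)
    also have "\<dots> \<le> \<bar>t\<bar> ^ k * (C * K ^ k / fact k)"
      by (rule mult_left_mono[OF cb]) simp
    also have "\<dots> = C * (inverse (fact k) * (K * \<bar>t\<bar>) ^ k)"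
      by (simp add: field_simps power_mult_distrib)
    finally show "norm (norm (t ^ k *\<^sub>R c k)) \<le> C * (inverse (fact k) * (K * \<bar>t\<bar>) ^ k)" .
  qed
  define X where "X t = (\<Sum>k. t ^ k *\<^sub>R c k)" for t :: real
  have Xs: "(\<lambda>k. t ^ k *\<^sub>R c k) sums X t" for t
    unfolding X_def using summ by (simp add: summable_sums)
  have ds: "(\<lambda>k. t ^ k *\<^sub>R (A *v c k + (if k = 0 then a else 0))) sums (A *v X t + a)" for t
  proof -
    have 1: "(\<lambda>k. t ^ k *\<^sub>R (A *v c k)) sums (A *v X t)"
      using bounded_linear.sums[OF matrix_vector_mul_bounded_linear[of A] Xs[of t]]
      by (simp add: matrix_vector_mult_scaleR)
    have 2: "(\<lambda>k. t ^ k *\<^sub>R (if k = 0 then a else 0)) sums a"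
    proof -
      have "(\<lambda>k. t ^ k *\<^sub>R (if k = 0 then a else 0)) = (\<lambda>k. if k = 0 then a else 0)"
        by (rule ext) simp
      then show ?thesis using sums_single[of 0 "\<lambda>_. a"] by simp
    qed
    show ?thesis using sums_add[OF 1 2] by (simp add: scaleR_add_right)
  qed
  have comp_sums: "(\<lambda>k. c k $ j * t ^ k) sums (X t $ j)" for t j
    using sums_vec_nth[OF Xs[of t], of j] by (simp add: mult.commute)
  have deriv_j: "((\<lambda>t. X t $ j) has_real_derivative (A *v X t + a) $ j) (at t)" for t j
  proof -
    let ?cj = "\<lambda>k. c k $ j"
    have sm: "summable (\<lambda>n. ?cj n * y ^ n)" for y
      by (rule sums_summable[OF comp_sums])
    have D: "((\<lambda>x. \<Sum>n. ?cj n * x ^ n) has_real_derivative (\<Sum>n. diffs ?cj n * t ^ n)) (at t)"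
      by (rule termdiffs_strong_converges_everywhere) (rule sm)
    have "diffs ?cj n = (A *v c n + (if n = 0 then a else 0)) $ j" for n
      unfolding diffs_def c_def by simp
    then have "(\<lambda>n. diffs ?cj n * t ^ n) sums (A *v X t + a) $ j"
      using sums_vec_nth[OF ds[of t], of j] by (simp add: mult.commute)
    then have e1: "(\<Sum>n. diffs ?cj n * t ^ n) = (A *v X t + a) $ j" by (rule sums_unique[symmetric])
    have e2: "(\<lambda>x. \<Sum>n. ?cj n * x ^ n) = (\<lambda>x. X x $ j)"
      by (rule ext) (rule sums_unique[symmetric], rule comp_sums)
    show ?thesis using D unfolding e1 e2 .
  qed
  have vd: "(X has_vector_derivative (A *v X t + a)) (at t within S)" for t S
  proof -
    have "(X has_derivative (\<lambda>h. h *\<^sub>R (A *v X t + a))) (at t)"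
    proof (rule has_derivative_componentwise_within[THEN iffD2], intro ballI)
      fix b :: "real^'n" assume "b \<in> Basis"
      then obtain j where b: "b = axis j 1" using axis_inverse by blast
      have "((\<lambda>t. X t $ j) has_derivative (\<lambda>h. h * (A *v X t + a) $ j)) (at t)"
      proof -
        have e: "(\<lambda>h. h * (A *v X t + a) $ j) = (*) ((A *v X t + a) $ j)" by (rule ext) (simp add: mult.commute)
        show ?thesis unfolding e using deriv_j[of j t] unfolding has_field_derivative_def .
      qed
      then show "((\<lambda>x. X x \<bullet> b) has_derivative (\<lambda>x. x *\<^sub>R (A *v X t + a) \<bullet> b)) (at t)"
        unfolding b by (simp add: inner_axis)
    qed
    then show ?thesis unfolding has_vector_derivative_def by (rule has_derivative_at_withinI)
  qed
  have X0: "X 0 = x0"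
  proof -
    have eq: "(\<lambda>k. (0::real) ^ k *\<^sub>R c k) = (\<lambda>k. if k = 0 then c 0 else 0)" by (rule ext) simp
    have s1: "(\<lambda>k. if k = 0 then c 0 else 0) sums X 0" using Xs[of 0] unfolding eq .
    have "(\<lambda>k. if k = 0 then c k else 0) sums c 0" by (rule sums_single)
    then have s2: "(\<lambda>k. if k = 0 then c 0 else 0) sums c 0" by (simp cong: if_cong)
    have "X 0 = c 0" by (rule sums_unique2[OF s1 s2])
    then show ?thesis unfolding c_def by simp
  qed
  have "is_solution A a B (\<lambda>_. 0) x0 X"
    unfolding is_solution_def
  proof (intro conjI allI impI)
    show "X 0 = x0" by (rule X0)
    fix t :: real assume "t \<ge> 0"
    have "((\<lambda>s. A *v X s + a) has_integral (X t - X 0)) {0..t}"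
      by (rule fundamental_theorem_of_calculus[OF \<open>t \<ge> 0\<close>]) (rule vd)
    then show "((\<lambda>s. A *v X s + a + B *v 0) has_integral (X t - x0)) {0..t}"
      using X0 by simp
  qed
  then show ?thesis by blast
qed


theorem proposition1:
  fixes A :: "real^'n^'n" and a :: "real^'n" and B :: "real^'m^'n"
    and \<Omega> \<Omega>f :: "(real^'n) set"
  assumes "closed \<Omega>" and "closed \<Omega>f" and "\<Omega> \<inter> \<Omega>f \<noteq> {}"
  shows "set_reaches_within A a B \<Omega> \<Omega>f \<longleftrightarrow>
         \<not> (\<exists>S. S \<noteq> {} \<and> S \<subseteq> \<Omega> - \<Omega>f \<and> Omega_invariant A a B \<Omega> S)"
proof
  assume R: "set_reaches_within A a B \<Omega> \<Omega>f"
  show "\<not> (\<exists>S. S \<noteq> {} \<and> S \<subseteq> \<Omega> - \<Omega>f \<and> Omega_invariant A a B \<Omega> S)"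
  proof
    assume "\<exists>S. S \<noteq> {} \<and> S \<subseteq> \<Omega> - \<Omega>f \<and> Omega_invariant A a B \<Omega> S"
    then obtain S where S: "S \<noteq> {}" "S \<subseteq> \<Omega> - \<Omega>f" "Omega_invariant A a B \<Omega> S" by blast
    obtain y0 where y0: "y0 \<in> S" using S(1) by blast
    then have "reaches_within A a B \<Omega> \<Omega>f y0" using R S(2) unfolding set_reaches_within_def by blast
    then obtain u :: "real \<Rightarrow> real^'m" and x T where
      r: "piecewise_continuous u" "is_solution A a B u y0 x" "T \<ge> 0" "x T \<in> \<Omega>f" "\<forall>t\<in>{0..T}. x t \<in> \<Omega>"
      unfolding reaches_within_def by blast
    have "\<forall>t\<in>{0..T}. x t \<in> S"
      using S(3) y0 r unfolding Omega_invariant_def by blast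
    then have "x T \<in> S" using r(3) by auto
    then show False using S(2) r(4) by blast
  qed
next
  assume N: "\<not> (\<exists>S. S \<noteq> {} \<and> S \<subseteq> \<Omega> - \<Omega>f \<and> Omega_invariant A a B \<Omega> S)"
  show "set_reaches_within A a B \<Omega> \<Omega>f"
    unfolding set_reaches_within_def
  proof (rule ccontr)
    assume "\<not> (\<forall>x0\<in>\<Omega>. reaches_within A a B \<Omega> \<Omega>f x0)"
    then obtain z0 where z0: "z0 \<in> \<Omega>" "\<not> reaches_within A a B \<Omega> \<Omega>f z0" by blast
    define S where "S = {y \<in> \<Omega>. \<not> reaches_within A a B \<Omega> \<Omega>f y}"
    have ne: "S \<noteq> {}" using z0 unfolding S_def by blast
    have sub: "S \<subseteq> \<Omega> - \<Omega>f"
    proof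
      fix y assume y: "y \<in> S"
      show "y \<in> \<Omega> - \<Omega>f"
      proof (rule ccontr)
        assume "y \<notin> \<Omega> - \<Omega>f"
        then have yf: "y \<in> \<Omega>f" "y \<in> \<Omega>" using y unfolding S_def by auto
        obtain x where x: "is_solution A a B (\<lambda>_. 0 :: real^'m) y x" using exists_sol by blast
        have "x 0 = y" using x unfolding is_solution_def by simp
        then have "reaches_within A a B \<Omega> \<Omega>f y"
          unfolding reaches_within_def
          using pc_zero x yf by (intro exI[of _ "\<lambda>_. 0 :: real^'m"] exI[of _ x] exI[of _ 0]) auto
        then show False using y unfolding S_def by blast
      qed
    qed
    have fin: "x t \<in> S"
      if y0: "y0 \<in> S" and u: "piecewise_continuous (u :: real \<Rightarrow> real^'m)"
        and x: "is_solution A a B u y0 x" and T: "T \<ge> 0" and inO: "\<forall>t\<in>{0..T}. x t \<in> \<Omega>"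
        and t: "t \<in> {0..T}" for y0 u x T t
    proof (rule ccontr)
      assume "x t \<notin> S"
      then have "reaches_within A a B \<Omega> \<Omega>f (x t)" using inO t unfolding S_def by blast
      then obtain v :: "real \<Rightarrow> real^'m" and y T' where
        r: "piecewise_continuous v" "is_solution A a B v (x t) y" "T' \<ge> 0" "y T' \<in> \<Omega>f"
           "\<forall>s\<in>{0..T'}. y s \<in> \<Omega>"
        unfolding reaches_within_def by blast
      have t0: "t \<ge> 0" "t \<le> T" using t by auto
      let ?w = "\<lambda>s. if s \<le> t then u s else v (s - t)"
      let ?z = "\<lambda>s. if s \<le> t then x s else y (s - t)"
      have "reaches_within A a B \<Omega> \<Omega>f y0"
        unfolding reaches_within_def
      proof (intro exI conjI)
        show "piecewise_continuous ?w" by (rule glue_pc[OF u r(1) t0(1)])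
        show "is_solution A a B ?w y0 ?z" by (rule glue_sol[OF x r(2) t0(1)])
        show "t + T' \<ge> 0" using t0 r(3) by simp
        show "?z (t + T') \<in> \<Omega>f"
        proof (cases "T' = 0")
          case True
          have "y 0 = x t" using r(2) unfolding is_solution_def by simp
          then show ?thesis using r(4) True by simp
        next
          case False
          then show ?thesis using r(3,4) by simp
        qed
        show "\<forall>s\<in>{0..t + T'}. ?z s \<in> \<Omega>"
        proof
          fix s assume s: "s \<in> {0..t + T'}"
          show "?z s \<in> \<Omega>"
          proof (cases "s \<le> t")
            case True then show ?thesis using inO s t0 by auto
          next
            case False then show ?thesis using r(5) s by auto
          qed
        qed
      qed
      then show False using y0 unfolding S_def by blast
    qed
    have inv: "Omega_invariant A a B \<Omega> S"
      unfolding Omega_invariant_def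
    proof (intro conjI ballI allI impI)
      show "S \<subseteq> \<Omega>" unfolding S_def by blast
    next
      fix y0 and u :: "real \<Rightarrow> real^'m" and x and T t :: real
      assume h: "y0 \<in> S" "piecewise_continuous u \<and> is_solution A a B u y0 x" "0 \<le> T"
        "\<forall>t\<in>{0..T}. x t \<in> \<Omega>" "t \<in> {0..T}"
      then show "x t \<in> S" using fin by blast
    next
      fix y0 and u :: "real \<Rightarrow> real^'m" and x and t :: real
      assume h: "y0 \<in> S" "piecewise_continuous u \<and> is_solution A a B u y0 x"
        "\<forall>t\<ge>0. x t \<in> \<Omega>" "0 \<le> t"
      have "\<forall>s\<in>{0..t}. x s \<in> \<Omega>" using h(3) by auto
      then show "x t \<in> S" using fin[of y0 u x t t] h by auto
    qed
    show False using N ne sub inv by blast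
  qed
qed

end
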